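(* Let $A$ be a unital commutative Banach algebra, $X$ a compact Hausdorff space, and $f:X\to A$ a continuous function. Then there is an assignment $P\mapsto Pf$ from $\mathscr{P}(C(X))$ to $A$ such that: (i) $\phi(Pf)=P(\phi\circ f)$ for every $P\in\mathscr{P}(C(X))$ and every $\phi\in\mathfrak{M}(A)$; (ii) the set $\{Pf:P\in\mathscr{P}(C(X))\}$ is a subalgebra of $A$ and is dense in the closed subalgebra of $A$ generated by $f(X)$.
   Context: $C(X)$ is the Banach space of continuous complex functions on $X$ with the uniform norm. $\mathscr{P}(C(X))$ denotes the algebra of polynomials of finite type on $C(X)$: finite sums of functions $g\mapsto c\,\psi_1(g)\cdots\psi_n(g)$ with $n\ge0$, $c\in\mathbb{C}$, $\psi_i\in C(X)^*$. $\mathfrak{M}(A)$ is the character space of $A$ (nonzero multiplicative linear functionals); for $\phi\in\mathfrak{M}(A)$, $\phi\circ f\in C(X)$. The subalgebra generated by $f(X)$ means the smallest closed subalgebra of $A$ containing $f(X)$ and the unit. *)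

theory Defs
  imports "HOL-Analysis.Analysis"
begin

class cbanach_algebra = real_normed_algebra_1 + comm_ring_1 + banach +
  fixes scaleC :: "complex \<Rightarrow> 'a \<Rightarrow> 'a"
  assumes scaleC_add_right: "scaleC a (x + y) = scaleC a x + scaleC a y"
    and scaleC_add_left: "scaleC (a + b) x = scaleC a x + scaleC b x"
    and scaleC_scaleC: "scaleC a (scaleC b x) = scaleC (a * b) x"
    and scaleC_one: "scaleC 1 x = x"
    and scaleR_scaleC: "scaleR r x = scaleC (complex_of_real r) x"
    and norm_scaleC: "norm (scaleC a x) = cmod a * norm x"
    and mult_scaleC_left: "scaleC a x * y = scaleC a (x * y)"

definition character :: "('a::cbanach_algebra \<Rightarrow> complex) \<Rightarrow> bool" where
  "character \<phi> \<longleftrightarrow>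
     (\<forall>x y. \<phi> (x + y) = \<phi> x + \<phi> y) \<and>
     (\<forall>c x. \<phi> (scaleC c x) = c * \<phi> x) \<and>
     (\<forall>x y. \<phi> (x * y) = \<phi> x * \<phi> y) \<and>
     (\<exists>x. \<phi> x \<noteq> 0)"

text \<open>C(X): continuous complex functions on X (only values on X matter).\<close>
definition CX :: "'x::topological_space set \<Rightarrow> ('x \<Rightarrow> complex) set" where
  "CX X = {g. continuous_on X g}"

definition CX_dual :: "'x::topological_space set \<Rightarrow> (('x \<Rightarrow> complex) \<Rightarrow> complex) set" where
  "CX_dual X = {\<psi>.
     (\<forall>g\<in>CX X. \<forall>h\<in>CX X. \<psi> (\<lambda>x. g x + h x) = \<psi> g + \<psi> h) \<and>
     (\<forall>c. \<forall>g\<in>CX X. \<psi> (\<lambda>x. c * g x) = c * \<psi> g) \<and>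
     (\<exists>K. \<forall>g\<in>CX X. cmod (\<psi> g) \<le> K * (SUP x\<in>X. cmod (g x)))}"

definition poly_finite_type :: "'x::topological_space set \<Rightarrow> (('x \<Rightarrow> complex) \<Rightarrow> complex) set" where
  "poly_finite_type X = {P.
     (\<exists>(N::nat) (c::nat \<Rightarrow> complex) (m::nat \<Rightarrow> nat) (\<psi>::nat \<Rightarrow> nat \<Rightarrow> ('x \<Rightarrow> complex) \<Rightarrow> complex).
        (\<forall>k<N. \<forall>i<m k. \<psi> k i \<in> CX_dual X) \<and>
        (\<forall>g\<in>CX X. P g = (\<Sum>k<N. c k * (\<Prod>i<m k. \<psi> k i g)))) \<and>
     (\<forall>g. g \<notin> CX X \<longrightarrow> P g = 0)}"

definition csubalgebra :: "'a::cbanach_algebra set \<Rightarrow> bool" where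
  "csubalgebra S \<longleftrightarrow> 1 \<in> S \<and>
     (\<forall>x\<in>S. \<forall>y\<in>S. x + y \<in> S \<and> x * y \<in> S) \<and>
     (\<forall>c. \<forall>x\<in>S. scaleC c x \<in> S)"

definition closed_subalg_gen :: "'a::cbanach_algebra set \<Rightarrow> 'a set" where
  "closed_subalg_gen F = \<Inter>{B. csubalgebra B \<and> closed B \<and> F \<subseteq> B}"

end

theory Submission
  imports Defs "HOL-Computational_Algebra.Polynomial"
begin

datatype pexpr = PC complex | PV nat | PAdd pexpr pexpr | PMul pexpr pexpr

primrec ev :: "(complex \<Rightarrow> 'b::comm_ring_1) \<Rightarrow> (nat \<Rightarrow> 'b) \<Rightarrow> pexpr \<Rightarrow> 'b" where
  "ev h t (PC c) = h c"
| "ev h t (PV j) = t j"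
| "ev h t (PAdd a b) = ev h t a + ev h t b"
| "ev h t (PMul a b) = ev h t a * ev h t b"

primrec bnd :: "nat \<Rightarrow> pexpr \<Rightarrow> bool" where
  "bnd n (PC c) = True"
| "bnd n (PV j) = (j < n)"
| "bnd n (PAdd a b) = (bnd n a \<and> bnd n b)"
| "bnd n (PMul a b) = (bnd n a \<and> bnd n b)"

lemma ev_cong: "bnd n e \<Longrightarrow> (\<And>j. j < n \<Longrightarrow> t j = t' j) \<Longrightarrow> ev h t e = ev h t' e"
  by (induction e) auto

fun cadd :: "pexpr list \<Rightarrow> pexpr list \<Rightarrow> pexpr list" where
  "cadd [] ys = ys"
| "cadd xs [] = xs"
| "cadd (x#xs) (y#ys) = PAdd x y # cadd xs ys"

primrec cmul :: "pexpr list \<Rightarrow> pexpr list \<Rightarrow> pexpr list" where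
  "cmul [] ys = []"
| "cmul (x#xs) ys = cadd (map (PMul x) ys) (PC 0 # cmul xs ys)"

primrec cl :: "nat \<Rightarrow> pexpr \<Rightarrow> pexpr list" where
  "cl n (PC c) = [PC c]"
| "cl n (PV j) = (if j = n then [PC 0, PC 1] else [PV j])"
| "cl n (PAdd a b) = cadd (cl n a) (cl n b)"
| "cl n (PMul a b) = cmul (cl n a) (cl n b)"

lemma Poly_cadd: "Poly (map (ev h t) (cadd xs ys)) = Poly (map (ev h t) xs) + Poly (map (ev h t) ys)"
  by (induction xs ys rule: cadd.induct) auto

lemma Poly_mapmul: "Poly (map (ev h t \<circ> PMul x) ys) = smult (ev h t x) (Poly (map (ev h t) ys))"
  by (induction ys) auto

lemma Poly_cmul: "h 0 = 0 \<Longrightarrow> Poly (map (ev h t) (cmul xs ys)) = Poly (map (ev h t) xs) * Poly (map (ev h t) ys)"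
  by (induction xs) (auto simp: Poly_cadd Poly_mapmul)

lemma ev_cl: "h 0 = 0 \<Longrightarrow> h 1 = 1 \<Longrightarrow> ev h t e = poly (Poly (map (ev h t) (cl n e))) (t n)"
  by (induction e) (auto simp: Poly_cadd Poly_cmul)

lemma bnd_cadd: "\<forall>x\<in>set xs. bnd n x \<Longrightarrow> \<forall>x\<in>set ys. bnd n x \<Longrightarrow> \<forall>x\<in>set (cadd xs ys). bnd n x"
  by (induction xs ys rule: cadd.induct) auto

lemma bnd_cmul: "\<forall>x\<in>set xs. bnd n x \<Longrightarrow> \<forall>x\<in>set ys. bnd n x \<Longrightarrow> \<forall>x\<in>set (cmul xs ys). bnd n x"
proof (induction xs)
  case (Cons a xs)
  then show ?case by (simp del: cadd.simps) (rule bnd_cadd, auto)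
qed simp

lemma bnd_cl: "bnd (Suc n) e \<Longrightarrow> \<forall>x\<in>set (cl n e). bnd n x"
proof (induction e)
  case (PAdd e1 e2) then show ?case by (simp del: cadd.simps) (rule bnd_cadd, auto)
next
  case (PMul e1 e2) then show ?case by (simp del: cadd.simps cmul.simps) (rule bnd_cmul, auto)
qed auto

lemma ev_closed:
  assumes "\<And>a b. h (a + b) = h a + h b" "\<And>a b. h (a * b) = h a * h b"
  shows "bnd 0 e \<Longrightarrow> ev h s e = h (ev id t e)"
  by (induction e) (auto simp: assms)

lemma poly_identity:
  fixes h :: "complex \<Rightarrow> 'b::comm_ring_1"
  assumes hadd: "\<And>a b. h (a + b) = h a + h b" and hmul: "\<And>a b. h (a * b) = h a * h b"
    and h0: "h 0 = 0" and h1: "h 1 = 1"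
  shows "bnd n e \<Longrightarrow> (\<forall>t. ev id t e = 0) \<Longrightarrow> ev h s e = 0"
proof (induction n arbitrary: e s)
  case 0
  have "ev id (\<lambda>_. 0) e = 0" using 0(2) by blast
  then show ?case using ev_closed[OF hadd hmul 0(1), of s "\<lambda>_. 0"] h0 by simp
next
  case (Suc n)
  let ?l = "cl n e"
  have bl: "\<forall>x\<in>set ?l. bnd n x" using bnd_cl Suc.prems(1) by blast
  have z: "\<forall>x\<in>set ?l. \<forall>t. ev id t x = 0"
  proof (intro ballI allI)
    fix x t assume x: "x \<in> set ?l"
    have "\<forall>z. poly (Poly (map (ev id t) ?l)) z = 0"
    proof
      fix z
      have "map (ev id t) ?l = map (ev id (t(n:=z))) ?l"
        using bl by (auto intro!: ev_cong)
      moreover have "ev id (t(n:=z)) e = poly (Poly (map (ev id (t(n:=z))) ?l)) z"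
        using ev_cl[of "id::complex\<Rightarrow>complex" "t(n:=z)" e n] by simp
      ultimately show "poly (Poly (map (ev id t) ?l)) z = 0" using Suc.prems(2) by metis
    qed
    then have "Poly (map (ev id t) ?l) = 0" using poly_all_0_iff_0 by blast
    then obtain k where "map (ev id t) ?l = replicate k 0" using Poly_eq_0 by blast
    then show "ev id t x = 0" using x
      by (metis image_eqI in_set_replicate list.set_map)
  qed
  have "\<forall>x\<in>set ?l. ev h s x = 0" using Suc.IH bl z by blast
  then have "map (ev h s) ?l = replicate (length ?l) 0"
    by (simp add: map_replicate_const[symmetric] cong: map_cong)
  then have "Poly (map (ev h s) ?l) = 0" by (simp add: Poly_eq_0)
  then show ?case using ev_cl[OF h0 h1, of s e n] by simp
qed



definition cs :: "complex \<Rightarrow> 'a::cbanach_algebra" where "cs c = scaleC c 1"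

lemma scaleC_zero_left: "scaleC 0 (x::'a::cbanach_algebra) = 0"
  using scaleC_add_left[of 0 0 x] by simp

lemma scaleC_eq_cs: "scaleC c (x::'a::cbanach_algebra) = cs c * x"
  unfolding cs_def using mult_scaleC_left[of c 1 x] by simp

lemma cs_add: "cs (a + b) = (cs a + cs b :: 'a::cbanach_algebra)"
  unfolding cs_def by (simp add: scaleC_add_left)
lemma cs_mult: "cs (a * b) = (cs a * cs b :: 'a::cbanach_algebra)"
  unfolding cs_def by (simp add: mult_scaleC_left scaleC_scaleC)
lemma cs_0[simp]: "cs 0 = (0::'a::cbanach_algebra)"
  unfolding cs_def by (simp add: scaleC_zero_left)
lemma cs_1[simp]: "cs 1 = (1::'a::cbanach_algebra)"
  unfolding cs_def by (simp add: scaleC_one)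
lemma cs_uminus: "cs (- a) = (- cs a :: 'a::cbanach_algebra)"
  using cs_add[of a "-a", where 'a='a] by (simp add: eq_neg_iff_add_eq_0 add.commute)
lemma cs_diff: "cs (a - b) = (cs a - cs b :: 'a::cbanach_algebra)"
  by (metis cs_add cs_uminus diff_conv_add_uminus)
lemma norm_cs_mult: "norm (cs c * (x::'a::cbanach_algebra)) = cmod c * norm x"
  by (metis norm_scaleC scaleC_eq_cs)
lemma norm_cs: "norm (cs c :: 'a::cbanach_algebra) = cmod c"
  using norm_cs_mult[of c "1::'a"] by simp

lemma cs_sum: "cs (\<Sum>i\<in>I. g i) = (\<Sum>i\<in>I. cs (g i) :: 'a::cbanach_algebra)"
  by (induction I rule: infinite_finite_induct) (auto simp: cs_add)

lemma char_props:
  assumes "character \<phi>"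
  shows "\<phi> (x + y) = \<phi> x + \<phi> y" "\<phi> (x * y) = \<phi> x * \<phi> y" "\<phi> (cs c * x) = c * \<phi> x"
    "\<phi> 0 = 0" "\<phi> 1 = 1" "\<phi> (x - y) = \<phi> x - \<phi> y" "\<phi> (cs c) = c"
proof -
  show a: "\<phi> (x + y) = \<phi> x + \<phi> y" for x y using assms unfolding character_def by blast
  show m: "\<phi> (x * y) = \<phi> x * \<phi> y" for x y using assms unfolding character_def by blast
  show s: "\<phi> (cs c * x) = c * \<phi> x" for c x using assms unfolding character_def
    by (metis scaleC_eq_cs)
  show z: "\<phi> 0 = 0" using a[of 0 0] by simp
  obtain x where x: "\<phi> x \<noteq> 0" using assms unfolding character_def by blast
  show o: "\<phi> 1 = 1" using m[of 1 x] x by simp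
  show "\<phi> (x - y) = \<phi> x - \<phi> y" for x y using a[of "x - y" y] by simp
  show "\<phi> (cs c) = c" using s[of c 1] o by simp
qed

lemma char_sum: "character \<phi> \<Longrightarrow> \<phi> (\<Sum>i\<in>I. g i) = (\<Sum>i\<in>I. \<phi> (g i))"
  by (induction I rule: infinite_finite_induct) (auto simp: char_props)

lemma char_bound:
  fixes \<phi> :: "'a::cbanach_algebra \<Rightarrow> complex"
  assumes ch: "character \<phi>"
  shows "cmod (\<phi> a) \<le> norm a"
proof (rule ccontr)
  assume "\<not> ?thesis"
  then have lt: "norm a < cmod (\<phi> a)" by simp
  let ?l = "\<phi> a"
  have l0: "?l \<noteq> 0" using lt norm_ge_zero[of a] by auto
  define b where "b = cs (1 / ?l) * a"
  have nb: "norm b < 1" unfolding b_def norm_cs_mult using lt l0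
    by (simp add: norm_divide divide_less_eq mult.commute)
  have pb: "\<phi> b = 1" unfolding b_def using l0 by (simp add: char_props[OF ch])
  have sm: "summable (\<lambda>n. b ^ n)" using complete_algebra_summable_geometric[OF nb] by simp
  define s where "s = (\<Sum>n. b ^ n)"
  have lim1: "(\<lambda>N. \<Sum>n<N. b ^ n) \<longlonglongrightarrow> s" unfolding s_def using sm summable_LIMSEQ by blast
  have eq: "(1 - b) * (\<Sum>n<N. b ^ n) = 1 - b ^ N" for N
  proof (induction N)
    case (Suc N)
    have "(1-b)*(\<Sum>n<Suc N. b^n) = (1-b)*(\<Sum>n<N. b^n) + (1-b)*b^N" by (simp add: distrib_left)
    also have "\<dots> = 1 - b^Suc N" using Suc by (simp add: algebra_simps)
    finally show ?case .
  qed simp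
  have p0: "(\<lambda>N. b ^ N) \<longlonglongrightarrow> 0"
  proof -
    have "(\<lambda>N. norm b ^ N) \<longlonglongrightarrow> 0" using nb by (simp add: LIMSEQ_power_zero)
    then show ?thesis
      by (rule Lim_null_comparison[rotated]) (auto intro!: always_eventually norm_power_ineq)
  qed
  have "(\<lambda>N. (1 - b) * (\<Sum>n<N. b ^ n)) \<longlonglongrightarrow> (1 - b) * s"
    by (intro tendsto_intros lim1)
  moreover have "(\<lambda>N. (1 - b) * (\<Sum>n<N. b ^ n)) \<longlonglongrightarrow> 1 - 0"
    unfolding eq by (intro tendsto_intros p0)
  ultimately have "(1 - b) * s = 1" using LIMSEQ_unique by fastforce
  then have "\<phi> ((1 - b) * s) = 1" using char_props[OF ch] by simp
  moreover have "\<phi> ((1 - b) * s) = 0" using pb by (simp add: char_props[OF ch])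
  ultimately show False by simp
qed

lemma char_cont:
  fixes \<phi> :: "'a::cbanach_algebra \<Rightarrow> complex"
  assumes ch: "character \<phi>"
  shows "continuous_on S \<phi>"
  unfolding continuous_on_iff
proof (intro ballI allI impI)
  fix x e assume "x \<in> S" "(0::real) < e"
  then show "\<exists>d>0. \<forall>x'\<in>S. dist x' x < d \<longrightarrow> dist (\<phi> x') (\<phi> x) < e"
    by (intro exI[of _ e]) (auto simp: dist_norm char_props(6)[OF ch, symmetric]
        intro: le_less_trans[OF char_bound[OF ch]])
qed



lemma CX_iff: "g \<in> CX X \<longleftrightarrow> continuous_on X g" unfolding CX_def by simp

lemma dual_add: "\<psi> \<in> CX_dual X \<Longrightarrow> g \<in> CX X \<Longrightarrow> h \<in> CX X \<Longrightarrow> \<psi> (\<lambda>x. g x + h x) = \<psi> g + \<psi> h"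
  unfolding CX_dual_def by blast
lemma dual_scale: "\<psi> \<in> CX_dual X \<Longrightarrow> g \<in> CX X \<Longrightarrow> \<psi> (\<lambda>x. c * g x) = c * \<psi> g"
  unfolding CX_dual_def by blast
lemma dual_zero: "\<psi> \<in> CX_dual X \<Longrightarrow> \<psi> (\<lambda>x. 0) = 0"
  using dual_scale[of \<psi> X "\<lambda>x. 0" 0] by (simp add: CX_iff)

lemma dual_sum:
  assumes "\<psi> \<in> CX_dual X" "finite I" "\<And>i. i \<in> I \<Longrightarrow> h i \<in> CX X"
  shows "\<psi> (\<lambda>x. \<Sum>i\<in>I. c i * h i x) = (\<Sum>i\<in>I. c i * \<psi> (h i))"
  using assms(2,3)
proof (induction I rule: finite_induct)
  case empty then show ?case using dual_zero[OF assms(1)] by simp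
next
  case (insert a F)
  have c1: "(\<lambda>x. c a * h a x) \<in> CX X" using insert by (auto simp: CX_iff intro!: continuous_intros)
  have c2: "(\<lambda>x. \<Sum>i\<in>F. c i * h i x) \<in> CX X" using insert by (auto simp: CX_iff intro!: continuous_intros)
  have "\<psi> (\<lambda>x. \<Sum>i\<in>insert a F. c i * h i x) = \<psi> (\<lambda>x. c a * h a x + (\<Sum>i\<in>F. c i * h i x))"
    using insert by simp
  also have "\<dots> = \<psi> (\<lambda>x. c a * h a x) + \<psi> (\<lambda>x. \<Sum>i\<in>F. c i * h i x)"
    using dual_add[OF assms(1) c1 c2] by simp
  also have "\<dots> = c a * \<psi> (h a) + (\<Sum>i\<in>F. c i * \<psi> (h i))"
    using insert dual_scale[OF assms(1)] by simp
  finally show ?case using insert by simp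
qed

lemma dual_diff:
  assumes "\<psi> \<in> CX_dual X" "g \<in> CX X" "h \<in> CX X"
  shows "\<psi> (\<lambda>x. g x - h x) = \<psi> g - \<psi> h"
proof -
  have c: "(\<lambda>x. (-1) * h x) \<in> CX X" using assms by (auto simp: CX_iff intro!: continuous_intros)
  have "\<psi> (\<lambda>x. g x + (-1) * h x) = \<psi> g + \<psi> (\<lambda>x. (-1) * h x)"
    using dual_add[OF assms(1,2) c] by simp
  then show ?thesis using dual_scale[OF assms(1,3), of "-1"] by simp
qed

lemma dual_bound:
  assumes "\<psi> \<in> CX_dual X"
  obtains K where "K \<ge> 0" "\<And>g d. g \<in> CX X \<Longrightarrow> (\<And>x. x \<in> X \<Longrightarrow> cmod (g x) \<le> d) \<Longrightarrow> cmod (\<psi> g) \<le> K * d"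
proof -
  obtain K where K: "\<And>g. g \<in> CX X \<Longrightarrow> cmod (\<psi> g) \<le> K * (SUP x\<in>X. cmod (g x))"
    using assms unfolding CX_dual_def by blast
  show ?thesis
  proof (cases "X = {}")
    case True
    have "\<psi> g = 0" if "g \<in> CX X" for g
    proof (rule ccontr)
      assume ne: "\<psi> g \<noteq> 0"
      define s where "s = K * (SUP x\<in>X. cmod (g x))"
      have sX: "K * (SUP x\<in>X. cmod (h x)) = s" for h unfolding s_def using True by simp
      define c :: complex where "c = of_real ((\<bar>s\<bar> + 1) / cmod (\<psi> g))"
      have gc: "(\<lambda>x. c * g x) \<in> CX X" using True by (simp add: CX_iff)
      have cm: "cmod (c * \<psi> g) = \<bar>s\<bar> + 1" unfolding c_def norm_mult norm_of_real
        using ne by (simp add: abs_of_nonneg)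
      have "cmod (\<psi> (\<lambda>x. c * g x)) \<le> s" using K[OF gc] sX by simp
      moreover have "cmod (\<psi> (\<lambda>x. c * g x)) = \<bar>s\<bar> + 1"
        using dual_scale[OF assms that, of c] cm by simp
      ultimately show False by linarith
    qed
    then show ?thesis by (intro that[of 0]) auto
  next
    case False
    show ?thesis
    proof (rule that[of "max K 0"])
      fix g d assume g: "g \<in> CX X" and b: "\<And>x. x \<in> X \<Longrightarrow> cmod (g x) \<le> d"
      have bdd: "bdd_above ((\<lambda>x. cmod (g x)) ` X)" using b by (intro bdd_aboveI[of _ d]) auto
      have sd: "(SUP x\<in>X. cmod (g x)) \<le> d" using False b by (intro cSUP_least) auto
      obtain x0 where "x0 \<in> X" using False by blast
      have s0: "0 \<le> (SUP x\<in>X. cmod (g x))"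
        using cSUP_upper[OF \<open>x0 \<in> X\<close> bdd] norm_ge_zero[of "g x0"] by linarith
      have "cmod (\<psi> g) \<le> K * (SUP x\<in>X. cmod (g x))" using K[OF g] .
      also have "\<dots> \<le> max K 0 * (SUP x\<in>X. cmod (g x))" using s0 by (intro mult_right_mono) auto
      also have "\<dots> \<le> max K 0 * d" using sd by (intro mult_left_mono) auto
      finally show "cmod (\<psi> g) \<le> max K 0 * d" .
    qed auto
  qed
qed

lemma dual_local:
  assumes "\<psi> \<in> CX_dual X" "g \<in> CX X" "h \<in> CX X" "\<And>x. x \<in> X \<Longrightarrow> g x = h x"
  shows "\<psi> g = \<psi> h"
proof -
  obtain K where K: "K \<ge> 0" "\<And>g d. g \<in> CX X \<Longrightarrow> (\<And>x. x \<in> X \<Longrightarrow> cmod (g x) \<le> d) \<Longrightarrow> cmod (\<psi> g) \<le> K * d"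
    using dual_bound[OF assms(1)] by blast
  have c: "(\<lambda>x. g x - h x) \<in> CX X" using assms by (auto simp: CX_iff intro!: continuous_intros)
  have "cmod (\<psi> (\<lambda>x. g x - h x)) \<le> K * 0" using K(2)[OF c, of 0] assms(4) by simp
  then show ?thesis using dual_diff[OF assms(1-3)] by simp
qed

lemma dual_tv:
  assumes psi: "\<psi> \<in> CX_dual X" and K: "\<And>g d. g \<in> CX X \<Longrightarrow> (\<And>x. x \<in> X \<Longrightarrow> cmod (g x) \<le> d) \<Longrightarrow> cmod (\<psi> g) \<le> K * d"
    and I: "finite I" and u: "\<And>i. i \<in> I \<Longrightarrow> continuous_on X (u i)"
    and u0: "\<And>i x. i \<in> I \<Longrightarrow> x \<in> X \<Longrightarrow> 0 \<le> u i x"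
    and u1: "\<And>x. x \<in> X \<Longrightarrow> (\<Sum>i\<in>I. u i x) \<le> 1"
  shows "(\<Sum>i\<in>I. cmod (\<psi> (\<lambda>x. complex_of_real (u i x)))) \<le> K"
proof -
  let ?U = "\<lambda>i x. complex_of_real (u i x)"
  define \<theta> where "\<theta> i = (if \<psi> (?U i) = 0 then 0 else cnj (\<psi> (?U i)) / cmod (\<psi> (?U i)))" for i
  have th: "\<theta> i * \<psi> (?U i) = of_real (cmod (\<psi> (?U i)))" for i
    unfolding \<theta>_def by (auto simp: complex_norm_square[symmetric] power2_eq_square field_simps)
  have thn: "cmod (\<theta> i) \<le> 1" for i
    unfolding \<theta>_def by (auto simp: norm_divide)
  have UC: "?U i \<in> CX X" if "i \<in> I" for i using u[OF that] by (auto simp: CX_iff intro!: continuous_intros)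
  have "complex_of_real (\<Sum>i\<in>I. cmod (\<psi> (?U i))) = (\<Sum>i\<in>I. \<theta> i * \<psi> (?U i))"
    by (simp add: th)
  also have "\<dots> = \<psi> (\<lambda>x. \<Sum>i\<in>I. \<theta> i * ?U i x)"
    using dual_sum[OF psi I UC] by simp
  finally have eq: "complex_of_real (\<Sum>i\<in>I. cmod (\<psi> (?U i))) = \<psi> (\<lambda>x. \<Sum>i\<in>I. \<theta> i * ?U i x)" .
  have cc: "(\<lambda>x. \<Sum>i\<in>I. \<theta> i * ?U i x) \<in> CX X" using u unfolding CX_iff by (auto intro!: continuous_intros)
  have bnd: "cmod (\<Sum>i\<in>I. \<theta> i * ?U i x) \<le> 1" if "x \<in> X" for x
  proof -
    have "cmod (\<Sum>i\<in>I. \<theta> i * ?U i x) \<le> (\<Sum>i\<in>I. cmod (\<theta> i * ?U i x))" by (rule norm_sum)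
    also have "\<dots> \<le> (\<Sum>i\<in>I. u i x)"
    proof (rule sum_mono)
      fix i assume i: "i \<in> I"
      have "cmod (\<theta> i * ?U i x) = cmod (\<theta> i) * u i x" using u0[OF i that] by (simp add: norm_mult)
      also have "\<dots> \<le> 1 * u i x" using thn u0[OF i that] by (intro mult_right_mono) auto
      finally show "cmod (\<theta> i * ?U i x) \<le> u i x" by simp
    qed
    also have "\<dots> \<le> 1" using u1[OF that] .
    finally show ?thesis .
  qed
  have "cmod (\<psi> (\<lambda>x. \<Sum>i\<in>I. \<theta> i * ?U i x)) \<le> K * 1" by (rule K[OF cc bnd])
  then have "cmod (complex_of_real (\<Sum>i\<in>I. cmod (\<psi> (?U i)))) \<le> K" using eq by simp
  moreover have "0 \<le> (\<Sum>i\<in>I. cmod (\<psi> (?U i)))" by (intro sum_nonneg) simp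
  ultimately show ?thesis by (simp only: norm_of_real abs_of_nonneg)
qed



context
  fixes X :: "'x::t2_space set" and f :: "'x \<Rightarrow> 'a::cbanach_algebra"
  assumes cX: "compact X" and cf: "continuous_on X f"
begin

definition pou :: "nat \<Rightarrow> (nat \<Rightarrow> 'x \<Rightarrow> real) \<Rightarrow> (nat \<Rightarrow> 'a) \<Rightarrow> real \<Rightarrow> bool" where
  "pou M g y \<delta> \<longleftrightarrow> 0 \<le> \<delta> \<and> (\<forall>j<M. continuous_on X (g j)) \<and> (\<forall>j<M. \<forall>x\<in>X. 0 \<le> g j x) \<and>
     (\<forall>x\<in>X. (\<Sum>j<M. g j x) = 1) \<and> (\<forall>j<M. \<forall>x\<in>X. g j x \<noteq> 0 \<longrightarrow> dist (f x) (y j) \<le> \<delta>) \<and>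
     (\<forall>j<M. y j \<in> f ` X)"

lemma pou_exists:
  assumes "\<delta> > 0"
  shows "\<exists>M g y. pou M g y \<delta>"
proof -
  have cfX: "compact (f ` X)" by (rule compact_continuous_image[OF cf cX])
  obtain K where K: "K \<subseteq> f ` X" "finite K" "f ` X \<subseteq> (\<Union>k\<in>K. ball k (\<delta>/2))"
    using compactE_image[OF cfX, of "f ` X" "\<lambda>k. ball k (\<delta>/2)"] assms by force
  obtain ys where ys: "set ys = K" using finite_list[OF K(2)] by blast
  define M where "M = length ys"
  define y where "y j = ys ! j" for j
  define u where "u j x = max 0 (\<delta> - dist (f x) (y j))" for j x
  define s where "s x = (\<Sum>j<M. u j x)" for x
  have u0: "0 \<le> u j x" for j x unfolding u_def by simp
  have spos: "s x > 0" if x: "x \<in> X" for x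
  proof -
    obtain k where k: "k \<in> K" "f x \<in> ball k (\<delta>/2)" using K(3) x by blast
    then obtain j where j: "j < M" "y j = k" using ys unfolding M_def y_def by (metis in_set_conv_nth)
    have "dist (f x) (y j) < \<delta>/2" using k j by (simp add: dist_commute)
    then have "u j x > 0" unfolding u_def less_max_iff_disj using zero_le_dist[of "f x" "y j"] by linarith
    moreover have "u j x \<le> s x" unfolding s_def using j u0 by (intro member_le_sum) auto
    ultimately show ?thesis by simp
  qed
  define g where "g j x = u j x / s x" for j x
  have "pou M g y \<delta>"
    unfolding pou_def
  proof (intro conjI allI impI ballI)
    show "0 \<le> \<delta>" using assms by simp
  next
    fix j assume "j < M"
    have cu: "continuous_on X (u j)" for j unfolding u_def using cf by (intro continuous_intros)
    have "continuous_on X s" unfolding s_def using cu by (intro continuous_intros)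
    then show "continuous_on X (g j)" unfolding g_def using cu spos
      by (intro continuous_intros) (auto dest: spos)
  next
    fix j x assume "j < M" "x \<in> X"
    then show "0 \<le> g j x" unfolding g_def using u0[of j x] spos[of x] by simp
  next
    fix x assume "x \<in> X"
    then show "(\<Sum>j<M. g j x) = 1" unfolding g_def using spos[of x]
      by (simp add: sum_divide_distrib[symmetric] s_def[symmetric])
  next
    fix j x assume "j < M" "x \<in> X" "g j x \<noteq> 0"
    then show "dist (f x) (y j) \<le> \<delta>" unfolding g_def u_def by auto
  next
    fix j assume "j < M"
    then show "y j \<in> f ` X" using K(1) ys unfolding y_def M_def by auto
  qed
  then show ?thesis by blast
qed

definition E :: "(('x \<Rightarrow> complex) \<Rightarrow> complex) \<Rightarrow> nat \<Rightarrow> (nat \<Rightarrow> 'x \<Rightarrow> real) \<Rightarrow> (nat \<Rightarrow> 'a) \<Rightarrow> 'a" where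
  "E \<psi> M g y = (\<Sum>j<M. cs (\<psi> (\<lambda>x. complex_of_real (g j x))) * y j)"

lemma cmp:
  assumes psi: "\<psi> \<in> CX_dual X" and K0: "K \<ge> 0"
    and Kb: "\<And>g d. g \<in> CX X \<Longrightarrow> (\<And>x. x \<in> X \<Longrightarrow> cmod (g x) \<le> d) \<Longrightarrow> cmod (\<psi> g) \<le> K * d"
    and P1: "pou M g y \<delta>" and P2: "pou L h z \<delta>'"
  shows "norm (E \<psi> M g y - E \<psi> L h z) \<le> K * (\<delta> + \<delta>')"
proof -
  define W where "W j k = (\<lambda>x. complex_of_real (g j x * h k x))" for j k
  have gc: "\<And>j. j < M \<Longrightarrow> continuous_on X (g j)" and hc: "\<And>k. k < L \<Longrightarrow> continuous_on X (h k)"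
    using P1 P2 unfolding pou_def by auto
  have WC: "W j k \<in> CX X" if "j < M" "k < L" for j k
    unfolding W_def CX_iff using gc[OF that(1)] hc[OF that(2)] by (intro continuous_intros)
  have gsum: "\<And>x. x \<in> X \<Longrightarrow> (\<Sum>j<M. g j x) = 1" and hsum: "\<And>x. x \<in> X \<Longrightarrow> (\<Sum>k<L. h k x) = 1"
    using P1 P2 unfolding pou_def by auto
  have e1: "\<psi> (\<lambda>x. complex_of_real (g j x)) = (\<Sum>k<L. \<psi> (W j k))" if j: "j < M" for j
  proof -
    have "\<psi> (\<lambda>x. complex_of_real (g j x)) = \<psi> (\<lambda>x. \<Sum>k<L. 1 * W j k x)"
    proof (rule dual_local[OF psi])
      show "(\<lambda>x. complex_of_real (g j x)) \<in> CX X" unfolding CX_iff using gc[OF j] by (intro continuous_intros)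
      show "(\<lambda>x. \<Sum>k<L. 1 * W j k x) \<in> CX X" using WC[OF j] unfolding CX_iff
        by (intro continuous_intros) auto
      fix x assume "x \<in> X"
      have "(\<Sum>k<L. 1 * W j k x) = complex_of_real (g j x * (\<Sum>k<L. h k x))"
        by (simp add: W_def sum_distrib_left)
      then show "complex_of_real (g j x) = (\<Sum>k<L. 1 * W j k x)"
        using hsum \<open>x \<in> X\<close> by simp
    qed
    also have "\<dots> = (\<Sum>k<L. 1 * \<psi> (W j k))" using WC[OF j] by (intro dual_sum[OF psi]) auto
    finally show ?thesis by simp
  qed
  have e2: "\<psi> (\<lambda>x. complex_of_real (h k x)) = (\<Sum>j<M. \<psi> (W j k))" if k: "k < L" for k
  proof -
    have "\<psi> (\<lambda>x. complex_of_real (h k x)) = \<psi> (\<lambda>x. \<Sum>j<M. 1 * W j k x)"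
    proof (rule dual_local[OF psi])
      show "(\<lambda>x. complex_of_real (h k x)) \<in> CX X" unfolding CX_iff using hc[OF k] by (intro continuous_intros)
      show "(\<lambda>x. \<Sum>j<M. 1 * W j k x) \<in> CX X" using WC k unfolding CX_iff
        by (intro continuous_intros) auto
      fix x assume "x \<in> X"
      have "(\<Sum>j<M. 1 * W j k x) = complex_of_real ((\<Sum>j<M. g j x) * h k x)"
        by (simp add: W_def sum_distrib_right)
      then show "complex_of_real (h k x) = (\<Sum>j<M. 1 * W j k x)"
        using gsum \<open>x \<in> X\<close> by simp
    qed
    also have "\<dots> = (\<Sum>j<M. 1 * \<psi> (W j k))" using WC k by (intro dual_sum[OF psi]) auto
    finally show ?thesis by simp
  qed
  have "E \<psi> M g y = (\<Sum>j<M. \<Sum>k<L. cs (\<psi> (W j k)) * y j)"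
    unfolding E_def by (simp add: e1 cs_sum sum_distrib_right)
  moreover have "E \<psi> L h z = (\<Sum>j<M. \<Sum>k<L. cs (\<psi> (W j k)) * z k)"
    unfolding E_def by (simp add: e2 cs_sum sum_distrib_right sum.swap[of _ "{..<L}"])
  ultimately have "E \<psi> M g y - E \<psi> L h z = (\<Sum>j<M. \<Sum>k<L. cs (\<psi> (W j k)) * (y j - z k))"
    by (simp add: sum_subtractf right_diff_distrib)
  then have "norm (E \<psi> M g y - E \<psi> L h z) \<le> (\<Sum>j<M. norm (\<Sum>k<L. cs (\<psi> (W j k)) * (y j - z k)))"
    by (simp add: norm_sum)
  also have "\<dots> \<le> (\<Sum>j<M. \<Sum>k<L. cmod (\<psi> (W j k)) * (\<delta> + \<delta>'))"
  proof (intro sum_mono order.trans[OF norm_sum])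
    fix j k assume j: "j \<in> {..<M}" and k: "k \<in> {..<L}"
    show "norm (cs (\<psi> (W j k)) * (y j - z k)) \<le> cmod (\<psi> (W j k)) * (\<delta> + \<delta>')"
    proof (cases "\<exists>x\<in>X. g j x * h k x \<noteq> 0")
      case True
      then obtain x where x: "x \<in> X" "g j x \<noteq> 0" "h k x \<noteq> 0" by auto
      have "dist (f x) (y j) \<le> \<delta>" "dist (f x) (z k) \<le> \<delta>'"
        using P1 P2 x j k unfolding pou_def by auto
      then have "norm (y j - z k) \<le> \<delta> + \<delta>'"
        using dist_triangle[of "y j" "z k" "f x"] by (simp add: dist_norm[symmetric] dist_commute)
      then show ?thesis unfolding norm_cs_mult by (intro mult_left_mono) auto
    next
      case False
      have "\<psi> (W j k) = \<psi> (\<lambda>x. 0)"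
        using False WC j k by (intro dual_local[OF psi]) (auto simp: W_def CX_iff)
      then show ?thesis using dual_zero[OF psi] by simp
    qed
  qed
  also have "\<dots> = (\<delta> + \<delta>') * (\<Sum>(j,k)\<in>{..<M}\<times>{..<L}. cmod (\<psi> (\<lambda>x. complex_of_real ((\<lambda>(j,k) x. g j x * h k x) (j,k) x))))"
    by (simp add: sum.cartesian_product sum_distrib_left mult.commute W_def case_prod_unfold)
  also have "\<dots> \<le> (\<delta> + \<delta>') * K"
  proof (intro mult_left_mono)
    have "(\<Sum>(j,k)\<in>{..<M}\<times>{..<L}. cmod (\<psi> (\<lambda>x. complex_of_real ((\<lambda>(j,k) x. g j x * h k x) (j,k) x))))
        = (\<Sum>p\<in>{..<M}\<times>{..<L}. cmod (\<psi> (\<lambda>x. complex_of_real ((\<lambda>(j,k) x. g j x * h k x) p x))))"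
      by (simp add: case_prod_unfold)
    also have "\<dots> \<le> K"
    proof (rule dual_tv[OF psi Kb])
      show "finite ({..<M}\<times>{..<L})" by simp
      fix p assume "p \<in> {..<M}\<times>{..<L}"
      then show "continuous_on X ((\<lambda>(j,k) x. g j x * h k x) p)" using gc hc
        by (auto intro!: continuous_intros)
    next
      fix p x assume "p \<in> {..<M}\<times>{..<L}" "x \<in> X"
      then show "0 \<le> (\<lambda>(j,k) x. g j x * h k x) p x" using P1 P2 unfolding pou_def by auto
    next
      fix x assume x: "x \<in> X"
      have "(\<Sum>p\<in>{..<M}\<times>{..<L}. (\<lambda>(j,k) x. g j x * h k x) p x) = (\<Sum>j<M. g j x) * (\<Sum>k<L. h k x)"
        by (simp add: sum.cartesian_product sum_product case_prod_unfold)
      then show "(\<Sum>p\<in>{..<M}\<times>{..<L}. (\<lambda>(j,k) x. g j x * h k x) p x) \<le> 1" using gsum[OF x] hsum[OF x] by simp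
    qed
    finally show "(\<Sum>(j,k)\<in>{..<M}\<times>{..<L}. cmod (\<psi> (\<lambda>x. complex_of_real ((\<lambda>(j,k) x. g j x * h k x) (j,k) x)))) \<le> K" .
    show "0 \<le> \<delta> + \<delta>'" using P1 P2 unfolding pou_def by auto
  qed
  finally show ?thesis by (simp add: mult.commute)
qed


definition pd :: "nat \<Rightarrow> nat \<times> (nat \<Rightarrow> 'x \<Rightarrow> real) \<times> (nat \<Rightarrow> 'a)" where
  "pd n = (SOME p. pou (fst p) (fst (snd p)) (snd (snd p)) (inverse (real (Suc n))))"

lemma pd_pou: "pou (fst (pd n)) (fst (snd (pd n))) (snd (snd (pd n))) (inverse (real (Suc n)))"
proof -
  obtain M g y where "pou M g y (inverse (real (Suc n)))" using pou_exists[of "inverse (real (Suc n))"] by auto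
  then have "\<exists>p. pou (fst p) (fst (snd p)) (snd (snd p)) (inverse (real (Suc n)))" by (intro exI[of _ "(M,g,y)"]) simp
  then show ?thesis unfolding pd_def by (rule someI_ex)
qed

definition En :: "(('x \<Rightarrow> complex) \<Rightarrow> complex) \<Rightarrow> nat \<Rightarrow> 'a" where
  "En \<psi> n = E \<psi> (fst (pd n)) (fst (snd (pd n))) (snd (snd (pd n)))"

definition Psi :: "(('x \<Rightarrow> complex) \<Rightarrow> complex) \<Rightarrow> 'a" where
  "Psi \<psi> = lim (En \<psi>)"

lemma En_conv:
  assumes psi: "\<psi> \<in> CX_dual X"
  shows "En \<psi> \<longlonglongrightarrow> Psi \<psi>"
proof -
  obtain K where K0: "K \<ge> 0"
    and Kb: "\<And>g d. g \<in> CX X \<Longrightarrow> (\<And>x. x \<in> X \<Longrightarrow> cmod (g x) \<le> d) \<Longrightarrow> cmod (\<psi> g) \<le> K * d"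
    using dual_bound[OF psi] by blast
  have "Cauchy (En \<psi>)"
  proof (rule metric_CauchyI)
    fix e :: real assume e: "e > 0"
    obtain N :: nat where N: "2 * (K + 1) / e < real N" using reals_Archimedean2 by blast
    have "dist (En \<psi> m) (En \<psi> n) < e" if "m \<ge> N" "n \<ge> N" for m n
    proof -
      have "dist (En \<psi> m) (En \<psi> n) \<le> K * (inverse (real (Suc m)) + inverse (real (Suc n)))"
        unfolding En_def dist_norm by (rule cmp[OF psi K0 Kb pd_pou pd_pou])
      also have "\<dots> \<le> (K + 1) * (inverse (real (Suc N)) + inverse (real (Suc N)))"
        using that K0 by (intro mult_mono add_mono) (auto simp: field_simps)
      also have "\<dots> < e"
      proof -
        have "2 * (K + 1) < e * real (Suc N)" using N e by (simp add: field_simps)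
        then show ?thesis using e by (simp add: field_simps)
      qed
      finally show ?thesis .
    qed
    then show "\<exists>M. \<forall>m\<ge>M. \<forall>n\<ge>M. dist (En \<psi> m) (En \<psi> n) < e" by blast
  qed
  then have "convergent (En \<psi>)" by (simp add: Cauchy_convergent_iff)
  then show ?thesis unfolding Psi_def by (simp add: convergent_LIMSEQ_iff)
qed

lemma Psi_approx:
  assumes psi: "\<psi> \<in> CX_dual X" and K0: "K \<ge> 0"
    and Kb: "\<And>g d. g \<in> CX X \<Longrightarrow> (\<And>x. x \<in> X \<Longrightarrow> cmod (g x) \<le> d) \<Longrightarrow> cmod (\<psi> g) \<le> K * d"
    and P: "pou M g y \<delta>"
  shows "norm (E \<psi> M g y - Psi \<psi>) \<le> K * \<delta>"
proof (rule LIMSEQ_le)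
  show "(\<lambda>n. norm (E \<psi> M g y - En \<psi> n)) \<longlonglongrightarrow> norm (E \<psi> M g y - Psi \<psi>)"
    by (intro tendsto_intros En_conv[OF psi])
  show "(\<lambda>n. K * (\<delta> + inverse (real (Suc n)))) \<longlonglongrightarrow> K * \<delta>"
    using tendsto_add[OF tendsto_const LIMSEQ_inverse_real_of_nat, of \<delta>]
    by (intro tendsto_intros) auto
  show "\<exists>N. \<forall>n\<ge>N. norm (E \<psi> M g y - En \<psi> n) \<le> K * (\<delta> + inverse (real (Suc n)))"
    unfolding En_def using cmp[OF psi K0 Kb P pd_pou] by blast
qed

lemma small_zero:
  fixes a C :: real
  assumes "C \<ge> 0" "\<And>\<delta>. \<delta> > 0 \<Longrightarrow> a \<le> C * \<delta>"
  shows "a \<le> 0"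
proof (rule ccontr)
  assume "\<not> a \<le> 0"
  then have a: "a > 0" by simp
  have "a \<le> C * (a / (C + 1))" using assms(2)[of "a / (C+1)"] a assms(1) by simp
  also have "\<dots> < a" using a assms(1) by (simp add: field_simps)
  finally show False by simp
qed

lemma Psi_char:
  assumes psi: "\<psi> \<in> CX_dual X" and ch: "character \<phi>"
  shows "\<phi> (Psi \<psi>) = \<psi> (\<phi> \<circ> f)"
proof -
  obtain K where K0: "K \<ge> 0"
    and Kb: "\<And>g d. g \<in> CX X \<Longrightarrow> (\<And>x. x \<in> X \<Longrightarrow> cmod (g x) \<le> d) \<Longrightarrow> cmod (\<psi> g) \<le> K * d"
    using dual_bound[OF psi] by blast
  have pfc: "(\<phi> \<circ> f) \<in> CX X" unfolding CX_iff
    by (rule continuous_on_compose[OF cf char_cont[OF ch]])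
  have "cmod (\<phi> (Psi \<psi>) - \<psi> (\<phi> \<circ> f)) \<le> 0"
  proof (rule small_zero[of "2 * K"])
    fix \<delta> :: real assume "\<delta> > 0"
    then obtain M g y where P: "pou M g y \<delta>" using pou_exists by blast
    have gc: "\<And>j. j < M \<Longrightarrow> continuous_on X (g j)" and gsum: "\<And>x. x \<in> X \<Longrightarrow> (\<Sum>j<M. g j x) = 1"
      and g0: "\<And>j x. j < M \<Longrightarrow> x \<in> X \<Longrightarrow> 0 \<le> g j x"
      and gd: "\<And>j x. j < M \<Longrightarrow> x \<in> X \<Longrightarrow> g j x \<noteq> 0 \<Longrightarrow> dist (f x) (y j) \<le> \<delta>"
      and d0: "0 \<le> \<delta>"
      using P unfolding pou_def by auto
    let ?G = "\<lambda>j x. complex_of_real (g j x)"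
    have GC: "?G j \<in> CX X" if "j < M" for j unfolding CX_iff using gc[OF that] by (intro continuous_intros)
    have S: "(\<lambda>x. \<Sum>j<M. \<phi> (y j) * ?G j x) \<in> CX X" using GC unfolding CX_iff by (intro continuous_intros) auto
    have ds: "\<psi> (\<lambda>x. \<Sum>j<M. \<phi> (y j) * ?G j x) = (\<Sum>j<M. \<phi> (y j) * \<psi> (?G j))"
      by (rule dual_sum[OF psi]) (auto intro: GC)
    have pE: "\<phi> (E \<psi> M g y) = \<psi> (\<lambda>x. \<Sum>j<M. \<phi> (y j) * ?G j x)"
      unfolding E_def ds by (simp add: char_sum[OF ch] char_props[OF ch] mult.commute)
    have "cmod (\<phi> (E \<psi> M g y) - \<psi> (\<phi> \<circ> f)) = cmod (\<psi> (\<lambda>x. (\<Sum>j<M. \<phi> (y j) * ?G j x) - (\<phi> \<circ> f) x))"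
      unfolding pE using dual_diff[OF psi S pfc] by simp
    also have "\<dots> \<le> K * \<delta>"
    proof (rule Kb)
      show "(\<lambda>x. (\<Sum>j<M. \<phi> (y j) * ?G j x) - (\<phi> \<circ> f) x) \<in> CX X" using S pfc unfolding CX_iff
        by (rule continuous_on_diff)
      fix x assume x: "x \<in> X"
      have "(\<Sum>j<M. \<phi> (y j) * ?G j x) - (\<phi> \<circ> f) x = (\<Sum>j<M. (\<phi> (y j) - \<phi> (f x)) * ?G j x)"
      proof -
        have "(\<Sum>j<M. \<phi> (f x) * ?G j x) = \<phi> (f x) * of_real (\<Sum>j<M. g j x)"
          by (simp add: sum_distrib_left)
        then have "(\<Sum>j<M. \<phi> (f x) * ?G j x) = (\<phi> \<circ> f) x" using gsum[OF x] by simp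
        then show ?thesis by (simp add: sum_subtractf left_diff_distrib)
      qed
      also have "cmod \<dots> \<le> (\<Sum>j<M. \<delta> * g j x)"
      proof (rule order.trans[OF norm_sum sum_mono])
        fix j assume j: "j \<in> {..<M}"
        show "cmod ((\<phi> (y j) - \<phi> (f x)) * ?G j x) \<le> \<delta> * g j x"
        proof (cases "g j x = 0")
          case False
          have "cmod (\<phi> (y j) - \<phi> (f x)) \<le> norm (y j - f x)"
            using char_bound[OF ch, of "y j - f x"] by (simp add: char_props[OF ch])
          also have "\<dots> \<le> \<delta>" using gd[of j x] j x False by (simp add: dist_norm norm_minus_commute)
          finally show ?thesis using g0[of j x] j x by (simp add: norm_mult mult_right_mono)
        qed simp
      qed
      also have "\<dots> = \<delta>" using gsum[OF x] by (simp add: sum_distrib_left[symmetric])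
      finally show "cmod ((\<Sum>j<M. \<phi> (y j) * ?G j x) - (\<phi> \<circ> f) x) \<le> \<delta>" .
    qed
    finally have a: "cmod (\<phi> (E \<psi> M g y) - \<psi> (\<phi> \<circ> f)) \<le> K * \<delta>" .
    have "cmod (\<phi> (E \<psi> M g y) - \<phi> (Psi \<psi>)) \<le> norm (E \<psi> M g y - Psi \<psi>)"
      using char_bound[OF ch, of "E \<psi> M g y - Psi \<psi>"] by (simp add: char_props[OF ch])
    also have "\<dots> \<le> K * \<delta>" by (rule Psi_approx[OF psi K0 Kb P])
    finally have b: "cmod (\<phi> (E \<psi> M g y) - \<phi> (Psi \<psi>)) \<le> K * \<delta>" .
    have "cmod (\<phi> (Psi \<psi>) - \<psi> (\<phi> \<circ> f)) \<le> cmod (\<phi> (E \<psi> M g y) - \<phi> (Psi \<psi>)) + cmod (\<phi> (E \<psi> M g y) - \<psi> (\<phi> \<circ> f))"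
      by (metis norm_diff_triangle_le norm_minus_commute order_refl)
    then show "cmod (\<phi> (Psi \<psi>) - \<psi> (\<phi> \<circ> f)) \<le> 2 * K * \<delta>" using a b by simp
  qed (use K0 in simp)
  then show ?thesis by simp
qed

lemma Psi_eval:
  assumes x0: "x0 \<in> X"
  shows "(\<lambda>g. g x0) \<in> CX_dual X" "Psi (\<lambda>g. g x0) = f x0"
proof -
  show psi: "(\<lambda>g. g x0) \<in> CX_dual X"
    unfolding CX_dual_def
  proof (intro CollectI conjI ballI allI exI[of _ 1])
    fix g assume "g \<in> CX X"
    then have "compact ((\<lambda>x. cmod (g x)) ` X)" using cX unfolding CX_iff
      by (intro compact_continuous_image continuous_intros)
    then have "bdd_above ((\<lambda>x. cmod (g x)) ` X)" by (simp add: bounded_imp_bdd_above compact_imp_bounded)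
    then show "cmod (g x0) \<le> 1 * (SUP x\<in>X. cmod (g x))" using cSUP_upper[OF x0, of "\<lambda>x. cmod (g x)"] by simp
  qed auto
  obtain K where K0: "K \<ge> 0"
    and Kb: "\<And>g d. g \<in> CX X \<Longrightarrow> (\<And>x. x \<in> X \<Longrightarrow> cmod (g x) \<le> d) \<Longrightarrow> cmod (g x0) \<le> K * d"
    using dual_bound[OF psi] by blast
  have "norm (Psi (\<lambda>g. g x0) - f x0) \<le> 0"
  proof (rule small_zero[of "K + 1"])
    fix \<delta> :: real assume "\<delta> > 0"
    then obtain M g y where P: "pou M g y \<delta>" using pou_exists by blast
    have gsum: "(\<Sum>j<M. g j x0) = 1" and g0: "\<And>j. j < M \<Longrightarrow> 0 \<le> g j x0"
      and gd: "\<And>j. j < M \<Longrightarrow> g j x0 \<noteq> 0 \<Longrightarrow> dist (f x0) (y j) \<le> \<delta>"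
      using P x0 unfolding pou_def by auto
    have "E (\<lambda>g. g x0) M g y - f x0 = (\<Sum>j<M. cs (complex_of_real (g j x0)) * (y j - f x0))"
    proof -
      have "(\<Sum>j<M. cs (complex_of_real (g j x0)) * f x0) = cs (complex_of_real (\<Sum>j<M. g j x0)) * f x0"
        by (simp add: cs_sum sum_distrib_right)
      then show ?thesis unfolding E_def using gsum by (simp add: sum_subtractf right_diff_distrib)
    qed
    then have "norm (E (\<lambda>g. g x0) M g y - f x0) \<le> (\<Sum>j<M. g j x0 * norm (y j - f x0))"
      using g0 by (auto intro!: order.trans[OF norm_sum] simp: norm_cs_mult)
    also have "\<dots> \<le> (\<Sum>j<M. g j x0 * \<delta>)"
    proof (rule sum_mono)
      fix j assume j: "j \<in> {..<M}"
      show "g j x0 * norm (y j - f x0) \<le> g j x0 * \<delta>"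
      proof (cases "g j x0 = 0")
        case False
        then show ?thesis using gd[of j] g0[of j] j by (intro mult_left_mono) (auto simp: dist_norm norm_minus_commute)
      qed simp
    qed
    also have "\<dots> = \<delta>" using gsum by (simp add: sum_distrib_right[symmetric])
    finally have a: "norm (E (\<lambda>g. g x0) M g y - f x0) \<le> \<delta>" .
    have b: "norm (E (\<lambda>g. g x0) M g y - Psi (\<lambda>g. g x0)) \<le> K * \<delta>" by (rule Psi_approx[OF psi K0 _ P]) (rule Kb; assumption)
    have "norm (Psi (\<lambda>g. g x0) - f x0) \<le> norm (E (\<lambda>g. g x0) M g y - Psi (\<lambda>g. g x0)) + norm (E (\<lambda>g. g x0) M g y - f x0)"
      by (metis norm_diff_triangle_le norm_minus_commute order_refl)
    then show "norm (Psi (\<lambda>g. g x0) - f x0) \<le> (K + 1) * \<delta>" using a b by (simp add: distrib_right)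
  qed (use K0 in simp)
  then show "Psi (\<lambda>g. g x0) = f x0" by simp
qed

lemma Psi_mem:
  assumes psi: "\<psi> \<in> CX_dual X" and B: "csubalgebra B" "closed B" "f ` X \<subseteq> B"
  shows "Psi \<psi> \<in> B"
proof -
  have z: "0 \<in> B" using B(1) unfolding csubalgebra_def by (metis scaleC_zero_left)
  have "En \<psi> n \<in> B" for n
  proof -
    have yB: "\<forall>j<fst (pd n). snd (snd (pd n)) j \<in> B" using pd_pou[of n] B(3) unfolding pou_def by blast
    have "(\<Sum>j<m. cs (\<psi> (\<lambda>x. complex_of_real (fst (snd (pd n)) j x))) * snd (snd (pd n)) j) \<in> B"
      if "m \<le> fst (pd n)" for m
      using that
    proof (induction m)
      case 0 then show ?case using z by simp
    next
      case (Suc m)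
      then show ?case using B(1) yB unfolding csubalgebra_def by (simp add: scaleC_eq_cs[symmetric])
    qed
    then show ?thesis unfolding En_def E_def by simp
  qed
  then show ?thesis using B(2) En_conv[OF psi] unfolding closed_sequential_limits by blast
qed


definition lrep :: "(('x \<Rightarrow> complex) \<Rightarrow> complex) \<Rightarrow> (complex \<times> (('x \<Rightarrow> complex) \<Rightarrow> complex) list) list \<Rightarrow> bool" where
  "lrep P ts \<longleftrightarrow> (\<forall>t\<in>set ts. \<forall>\<psi>\<in>set (snd t). \<psi> \<in> CX_dual X) \<and>
     (\<forall>g\<in>CX X. P g = (\<Sum>t\<leftarrow>ts. fst t * (\<Prod>\<psi>\<leftarrow>snd t. \<psi> g)))"

definition lval :: "(complex \<times> (('x \<Rightarrow> complex) \<Rightarrow> complex) list) list \<Rightarrow> 'a" where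
  "lval ts = (\<Sum>t\<leftarrow>ts. cs (fst t) * (\<Prod>\<psi>\<leftarrow>snd t. Psi \<psi>))"

definition FF :: "(complex \<times> (('x \<Rightarrow> complex) \<Rightarrow> complex) list) list \<Rightarrow> nat \<Rightarrow> (nat \<Rightarrow> 'x \<Rightarrow> real) \<Rightarrow> (nat \<Rightarrow> 'a) \<Rightarrow> 'a" where
  "FF ts M g y = (\<Sum>t\<leftarrow>ts. cs (fst t) * (\<Prod>\<psi>\<leftarrow>snd t. E \<psi> M g y))"

lemma tendsto_sum_list':
  fixes F :: "'c \<Rightarrow> nat \<Rightarrow> 'b::real_normed_vector"
  shows "(\<And>x. x \<in> set xs \<Longrightarrow> F x \<longlonglongrightarrow> L x) \<Longrightarrow> (\<lambda>n. \<Sum>x\<leftarrow>xs. F x n) \<longlonglongrightarrow> (\<Sum>x\<leftarrow>xs. L x)"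
  by (induction xs) (auto intro!: tendsto_add)

lemma tendsto_prod_list':
  fixes F :: "'c \<Rightarrow> nat \<Rightarrow> 'b::real_normed_algebra_1"
  shows "(\<And>x. x \<in> set xs \<Longrightarrow> F x \<longlonglongrightarrow> L x) \<Longrightarrow> (\<lambda>n. \<Prod>x\<leftarrow>xs. F x n) \<longlonglongrightarrow> (\<Prod>x\<leftarrow>xs. L x)"
  by (induction xs) (auto intro!: tendsto_mult)

lemma FF_conv:
  assumes "\<forall>t\<in>set ts. \<forall>\<psi>\<in>set (snd t). \<psi> \<in> CX_dual X"
  shows "(\<lambda>n. FF ts (fst (pd n)) (fst (snd (pd n))) (snd (snd (pd n)))) \<longlonglongrightarrow> lval ts"
  unfolding FF_def lval_def
  using assms by (intro tendsto_sum_list' tendsto_mult tendsto_const tendsto_prod_list')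
    (auto simp: En_def[symmetric] intro: En_conv)

definition lin :: "(('x \<Rightarrow> complex) \<Rightarrow> complex) \<Rightarrow> nat \<Rightarrow> (nat \<Rightarrow> 'x \<Rightarrow> real) \<Rightarrow> pexpr" where
  "lin \<psi> M g = foldr PAdd (map (\<lambda>j. PMul (PC (\<psi> (\<lambda>x. complex_of_real (g j x)))) (PV j)) [0..<M]) (PC 0)"

definition pe :: "(complex \<times> (('x \<Rightarrow> complex) \<Rightarrow> complex) list) list \<Rightarrow> nat \<Rightarrow> (nat \<Rightarrow> 'x \<Rightarrow> real) \<Rightarrow> pexpr" where
  "pe ts M g = foldr PAdd (map (\<lambda>t. PMul (PC (fst t)) (foldr PMul (map (\<lambda>\<psi>. lin \<psi> M g) (snd t)) (PC 1))) ts) (PC 0)"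

lemma ev_foldr_add: "h 0 = 0 \<Longrightarrow> ev h s (foldr PAdd xs (PC 0)) = (\<Sum>x\<leftarrow>xs. ev h s x)"
  by (induction xs) auto
lemma ev_foldr_mul: "h 1 = 1 \<Longrightarrow> ev h s (foldr PMul xs (PC 1)) = (\<Prod>x\<leftarrow>xs. ev h s x)"
  by (induction xs) auto
lemma bnd_foldr_add: "\<forall>x\<in>set xs. bnd n x \<Longrightarrow> bnd n (foldr PAdd xs (PC 0))"
  by (induction xs) auto
lemma bnd_foldr_mul: "\<forall>x\<in>set xs. bnd n x \<Longrightarrow> bnd n (foldr PMul xs (PC 1))"
  by (induction xs) auto

lemma bnd_pe: "bnd M (pe ts M g)"
  unfolding pe_def lin_def by (auto intro!: bnd_foldr_add bnd_foldr_mul)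

lemma ev_lin: "h 0 = 0 \<Longrightarrow> ev h s (lin \<psi> M g) = (\<Sum>j<M. h (\<psi> (\<lambda>x. complex_of_real (g j x))) * s j)"
  unfolding lin_def by (simp add: ev_foldr_add o_def sum.distinct_set_conv_list[symmetric] atLeast0LessThan)

lemma ev_pe: "h 0 = 0 \<Longrightarrow> h 1 = 1 \<Longrightarrow> ev h s (pe ts M g) =
   (\<Sum>t\<leftarrow>ts. h (fst t) * (\<Prod>\<psi>\<leftarrow>snd t. \<Sum>j<M. h (\<psi> (\<lambda>x. complex_of_real (g j x))) * s j))"
  unfolding pe_def by (simp add: ev_foldr_add ev_foldr_mul ev_lin o_def)

lemma FF_ev: "FF ts M g y = ev cs y (pe ts M g)"
  unfolding FF_def E_def by (simp add: ev_pe)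

lemma ev_pe_id:
  assumes rep: "lrep P ts" and P: "pou M g y \<delta>"
  shows "ev id t (pe ts M g) = P (\<lambda>x. \<Sum>j<M. t j * complex_of_real (g j x))"
proof -
  have gc: "\<And>j. j < M \<Longrightarrow> (\<lambda>x. complex_of_real (g j x)) \<in> CX X"
    using P unfolding pou_def CX_iff by (auto intro!: continuous_intros)
  have Gc: "(\<lambda>x. \<Sum>j<M. t j * complex_of_real (g j x)) \<in> CX X"
    using gc unfolding CX_iff by (auto intro!: continuous_intros)
  have psi: "\<forall>t\<in>set ts. \<forall>\<psi>\<in>set (snd t). \<psi> \<in> CX_dual X" using rep unfolding lrep_def by blast
  have "ev id t (pe ts M g) = (\<Sum>u\<leftarrow>ts. fst u * (\<Prod>\<psi>\<leftarrow>snd u. \<Sum>j<M. \<psi> (\<lambda>x. complex_of_real (g j x)) * t j))"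
    by (simp add: ev_pe)
  also have "\<dots> = (\<Sum>u\<leftarrow>ts. fst u * (\<Prod>\<psi>\<leftarrow>snd u. \<psi> (\<lambda>x. \<Sum>j<M. t j * complex_of_real (g j x))))"
  proof (intro arg_cong[where f=sum_list] map_cong refl arg_cong[where f="(*) _"] arg_cong[where f=prod_list])
    fix u \<psi> assume "u \<in> set ts" "\<psi> \<in> set (snd u)"
    then have "\<psi> \<in> CX_dual X" using psi by blast
    then show "(\<Sum>j<M. \<psi> (\<lambda>x. complex_of_real (g j x)) * t j) = \<psi> (\<lambda>x. \<Sum>j<M. t j * complex_of_real (g j x))"
      using dual_sum[of \<psi> X "{..<M}" "\<lambda>j x. complex_of_real (g j x)" t] gc by (simp add: mult.commute)
  qed
  also have "\<dots> = P (\<lambda>x. \<Sum>j<M. t j * complex_of_real (g j x))"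
    using rep Gc unfolding lrep_def by simp
  finally show ?thesis .
qed

lemma lval_wd:
  assumes r1: "lrep P ts1" and r2: "lrep P ts2"
  shows "lval ts1 = lval ts2"
proof -
  have eq: "FF ts1 M g y = FF ts2 M g y" if P: "pou M g y \<delta>" for M g y \<delta>
  proof -
    let ?e = "PAdd (pe ts1 M g) (PMul (PC (-1)) (pe ts2 M g))"
    have "ev cs y ?e = 0"
    proof (rule poly_identity[of cs M ?e y])
      show "cs (a + b) = cs a + cs b" for a b by (rule cs_add)
      show "cs (a * b) = cs a * cs b" for a b by (rule cs_mult)
      show "cs 0 = 0" "cs 1 = 1" by simp_all
      show "bnd M ?e" by (simp add: bnd_pe)
      show "\<forall>t. ev id t ?e = 0" using ev_pe_id[OF r1 P] ev_pe_id[OF r2 P] by simp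
    qed
    then have "FF ts1 M g y + cs (-1) * FF ts2 M g y = 0" by (simp add: FF_ev)
    then show ?thesis by (simp add: cs_uminus)
  qed
  have c1: "(\<lambda>n. FF ts1 (fst (pd n)) (fst (snd (pd n))) (snd (snd (pd n)))) \<longlonglongrightarrow> lval ts1"
    using r1 unfolding lrep_def by (intro FF_conv) blast
  have c2: "(\<lambda>n. FF ts1 (fst (pd n)) (fst (snd (pd n))) (snd (snd (pd n)))) \<longlonglongrightarrow> lval ts2"
    using r2 eq[OF pd_pou] unfolding lrep_def by (simp add: FF_conv)
  show ?thesis using c1 c2 LIMSEQ_unique by blast
qed

definition TT :: "(('x \<Rightarrow> complex) \<Rightarrow> complex) \<Rightarrow> 'a" where
  "TT P = lval (SOME ts. lrep P ts)"

lemma TT_eq: "lrep P ts \<Longrightarrow> TT P = lval ts"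
  unfolding TT_def by (rule lval_wd) (auto intro: someI)


lemma pft_lrep:
  assumes "P \<in> poly_finite_type X"
  shows "\<exists>ts. lrep P ts"
proof -
  obtain N :: nat and c and m :: "nat \<Rightarrow> nat" and \<psi> where ps: "\<forall>k<N. \<forall>i<m k. \<psi> k i \<in> CX_dual X"
    and eq: "\<forall>g\<in>CX X. P g = (\<Sum>k<N. c k * (\<Prod>i<m k. \<psi> k i g))"
  proof -
    have "\<exists>(N::nat) c (m::nat\<Rightarrow>nat) \<psi>. (\<forall>k<N. \<forall>i<m k. \<psi> k i \<in> CX_dual X) \<and>
        (\<forall>g\<in>CX X. P g = (\<Sum>k<N. c k * (\<Prod>i<m k. \<psi> k i g)))"
      using assms[unfolded poly_finite_type_def mem_Collect_eq] by (rule conjunct1)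
    then show ?thesis using that by blast
  qed
  define ts where "ts = map (\<lambda>k. (c k, map (\<psi> k) [0..<m k])) [0..<N]"
  have "lrep P ts" unfolding lrep_def
  proof (intro conjI ballI)
    fix t \<phi> assume "t \<in> set ts" "\<phi> \<in> set (snd t)"
    then show "\<phi> \<in> CX_dual X" using ps unfolding ts_def by auto
  next
    fix g assume g: "g \<in> CX X"
    have "(\<Sum>t\<leftarrow>ts. fst t * (\<Prod>\<phi>\<leftarrow>snd t. \<phi> g)) = (\<Sum>k<N. c k * (\<Prod>i<m k. \<psi> k i g))"
      unfolding ts_def
      by (simp add: o_def sum.distinct_set_conv_list[symmetric] prod.distinct_set_conv_list[symmetric] atLeast0LessThan)
    then show "P g = (\<Sum>t\<leftarrow>ts. fst t * (\<Prod>\<phi>\<leftarrow>snd t. \<phi> g))" using eq g by simp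
  qed
  then show ?thesis by blast
qed

lemma lrep_pft:
  assumes r: "lrep P ts" and z: "\<And>g. g \<notin> CX X \<Longrightarrow> P g = 0"
  shows "P \<in> poly_finite_type X"
  unfolding poly_finite_type_def
proof (rule CollectI, rule conjI)
  show "\<forall>g. g \<notin> CX X \<longrightarrow> P g = 0" using z by blast
  show "\<exists>(N::nat) c (m::nat\<Rightarrow>nat) \<psi>. (\<forall>k<N. \<forall>i<m k. \<psi> k i \<in> CX_dual X) \<and>
        (\<forall>g\<in>CX X. P g = (\<Sum>k<N. c k * (\<Prod>i<m k. \<psi> k i g)))"
  proof -
    have a: "\<forall>k<length ts. \<forall>i<length (snd (ts ! k)). snd (ts ! k) ! i \<in> CX_dual X"
      using r unfolding lrep_def by (meson nth_mem)
    have b: "\<forall>g\<in>CX X. P g = (\<Sum>k<length ts. fst (ts ! k) * (\<Prod>i<length (snd (ts ! k)). (snd (ts ! k) ! i) g))"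
    proof
      fix g assume "g \<in> CX X"
      then have "P g = (\<Sum>t\<leftarrow>ts. fst t * (\<Prod>\<phi>\<leftarrow>snd t. \<phi> g))" using r unfolding lrep_def by blast
      also have "\<dots> = (\<Sum>k<length ts. fst (ts ! k) * (\<Prod>i<length (snd (ts ! k)). (snd (ts ! k) ! i) g))"
        by (simp add: sum_list_sum_nth prod.list_conv_set_nth atLeast0LessThan)
      finally show "P g = (\<Sum>k<length ts. fst (ts ! k) * (\<Prod>i<length (snd (ts ! k)). (snd (ts ! k) ! i) g))" .
    qed
    show ?thesis by (rule exI)+ (rule conjI[OF a b])
  qed
qed

lemma tsmul_gen:
  fixes h :: "complex \<Rightarrow> 'b::comm_ring_1"
  assumes hm: "\<And>a b. h (a * b) = h a * h b"
  shows "(\<Sum>t\<leftarrow>ts1. h (fst t) * (\<Prod>\<psi>\<leftarrow>snd t. v \<psi>)) * (\<Sum>t\<leftarrow>ts2. h (fst t) * (\<Prod>\<psi>\<leftarrow>snd t. v \<psi>))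
    = (\<Sum>t\<leftarrow>concat (map (\<lambda>t1. map (\<lambda>t2. (fst t1 * fst t2, snd t1 @ snd t2)) ts2) ts1). h (fst t) * (\<Prod>\<psi>\<leftarrow>snd t. v \<psi>))"
proof (induction ts1)
  case (Cons t1 ts1)
  have "(\<Sum>t\<leftarrow>map (\<lambda>t2. (fst t1 * fst t2, snd t1 @ snd t2)) ts2. h (fst t) * (\<Prod>\<psi>\<leftarrow>snd t. v \<psi>))
      = (\<Sum>t2\<leftarrow>ts2. (h (fst t1) * (\<Prod>\<psi>\<leftarrow>snd t1. v \<psi>)) * (h (fst t2) * (\<Prod>\<psi>\<leftarrow>snd t2. v \<psi>)))"
    by (simp add: o_def hm mult_ac)
  also have "\<dots> = (h (fst t1) * (\<Prod>\<psi>\<leftarrow>snd t1. v \<psi>)) * (\<Sum>t\<leftarrow>ts2. h (fst t) * (\<Prod>\<psi>\<leftarrow>snd t. v \<psi>))"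
    by (simp add: sum_list_const_mult)
  finally show ?case using Cons by (simp add: distrib_right)
qed simp

lemma char_sum_list: "character \<phi> \<Longrightarrow> \<phi> (\<Sum>x\<leftarrow>xs. F x) = (\<Sum>x\<leftarrow>xs. \<phi> (F x))"
  by (induction xs) (auto simp: char_props)
lemma char_prod_list: "character \<phi> \<Longrightarrow> \<phi> (\<Prod>x\<leftarrow>xs. F x) = (\<Prod>x\<leftarrow>xs. \<phi> (F x))"
  by (induction xs) (auto simp: char_props)

lemma csub_sum_list: "csubalgebra B \<Longrightarrow> (\<And>x. x \<in> set xs \<Longrightarrow> F x \<in> B) \<Longrightarrow> (\<Sum>x\<leftarrow>xs. F x) \<in> B"
proof (induction xs)
  case Nil then have "scaleC 0 1 \<in> B" unfolding csubalgebra_def by blast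
  then show ?case by (simp add: scaleC_zero_left)
qed (auto simp: csubalgebra_def)
lemma csub_prod_list: "csubalgebra B \<Longrightarrow> (\<And>x. x \<in> set xs \<Longrightarrow> F x \<in> B) \<Longrightarrow> (\<Prod>x\<leftarrow>xs. F x) \<in> B"
  by (induction xs) (auto simp: csubalgebra_def)

lemma csub_closure:
  assumes S: "csubalgebra S"
  shows "csubalgebra (closure S)"
  unfolding csubalgebra_def
proof (intro conjI ballI allI)
  show "1 \<in> closure S" using S closure_subset unfolding csubalgebra_def by blast
next
  fix x y assume "x \<in> closure S" "y \<in> closure S"
  then obtain a b where a: "\<forall>n. a n \<in> S" "a \<longlonglongrightarrow> x" and b: "\<forall>n. b n \<in> S" "b \<longlonglongrightarrow> y"
    unfolding closure_sequential by blast
  have "\<forall>n. a n + b n \<in> S" using a b S unfolding csubalgebra_def by blast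
  moreover have "(\<lambda>n. a n + b n) \<longlonglongrightarrow> x + y" using a b by (intro tendsto_intros)
  ultimately show "x + y \<in> closure S" unfolding closure_sequential by (intro exI[of _ "\<lambda>n. a n + b n"]) simp
  have "\<forall>n. a n * b n \<in> S" using a b S unfolding csubalgebra_def by blast
  moreover have "(\<lambda>n. a n * b n) \<longlonglongrightarrow> x * y" using a b by (intro tendsto_intros)
  ultimately show "x * y \<in> closure S" unfolding closure_sequential by (intro exI[of _ "\<lambda>n. a n * b n"]) simp
next
  fix c x assume "x \<in> closure S"
  then obtain a where a: "\<forall>n. a n \<in> S" "a \<longlonglongrightarrow> x"
    unfolding closure_sequential by blast
  have "\<forall>n. cs c * a n \<in> S" using a S unfolding csubalgebra_def by (simp add: scaleC_eq_cs)
  moreover have "(\<lambda>n. cs c * a n) \<longlonglongrightarrow> cs c * x" using a by (intro tendsto_intros)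
  ultimately show "scaleC c x \<in> closure S" unfolding closure_sequential scaleC_eq_cs
    by (intro exI[of _ "\<lambda>n. cs c * a n"]) simp
qed

lemma main:
  "(\<forall>P\<in>poly_finite_type X. \<forall>\<phi>. character \<phi> \<longrightarrow> \<phi> (TT P) = P (\<phi> \<circ> f)) \<and>
   csubalgebra (TT ` poly_finite_type X) \<and>
   TT ` poly_finite_type X \<subseteq> closed_subalg_gen (f ` X) \<and>
   closed_subalg_gen (f ` X) \<subseteq> closure (TT ` poly_finite_type X)"
proof (intro conjI ballI allI impI)
  fix P and \<phi> :: "'a \<Rightarrow> complex" assume P: "P \<in> poly_finite_type X" and ch: "character \<phi>"
  obtain ts where r: "lrep P ts" using pft_lrep[OF P] by blast
  have psi: "\<forall>t\<in>set ts. \<forall>\<psi>\<in>set (snd t). \<psi> \<in> CX_dual X" using r unfolding lrep_def by blast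
  have pfc: "(\<phi> \<circ> f) \<in> CX X" unfolding CX_iff
    by (rule continuous_on_compose[OF cf char_cont[OF ch]])
  have "\<phi> (TT P) = (\<Sum>t\<leftarrow>ts. fst t * (\<Prod>\<psi>\<leftarrow>snd t. \<phi> (Psi \<psi>)))"
    unfolding TT_eq[OF r] lval_def by (simp add: char_sum_list[OF ch] char_prod_list[OF ch] char_props[OF ch] o_def)
  also have "\<dots> = (\<Sum>t\<leftarrow>ts. fst t * (\<Prod>\<psi>\<leftarrow>snd t. \<psi> (\<phi> \<circ> f)))"
    using psi by (intro arg_cong[where f=sum_list] map_cong refl arg_cong[where f="(*) _"] arg_cong[where f=prod_list])
      (auto simp: Psi_char[OF _ ch])
  also have "\<dots> = P (\<phi> \<circ> f)" using r pfc unfolding lrep_def by simp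
  finally show "\<phi> (TT P) = P (\<phi> \<circ> f)" .
next
  let ?S = "TT ` poly_finite_type X"
  show S: "csubalgebra ?S"
    unfolding csubalgebra_def
  proof (intro conjI ballI allI)
    define P1 where "P1 = (\<lambda>g::'x\<Rightarrow>complex. if g \<in> CX X then (1::complex) else 0)"
    have r1: "lrep P1 [(1, [])]" unfolding lrep_def P1_def by simp
    have "P1 \<in> poly_finite_type X" by (rule lrep_pft[OF r1]) (simp add: P1_def)
    moreover have "TT P1 = 1" using TT_eq[OF r1] by (simp add: lval_def)
    ultimately show "1 \<in> ?S" by force
  next
    fix a b assume "a \<in> ?S" "b \<in> ?S"
    then obtain P Q where P: "P \<in> poly_finite_type X" "a = TT P" and Q: "Q \<in> poly_finite_type X" "b = TT Q" by blast
    obtain ts1 where r1: "lrep P ts1" using pft_lrep[OF P(1)] by blast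
    obtain ts2 where r2: "lrep Q ts2" using pft_lrep[OF Q(1)] by blast
    have zP: "\<And>g. g \<notin> CX X \<Longrightarrow> P g = 0" and zQ: "\<And>g. g \<notin> CX X \<Longrightarrow> Q g = 0"
      using P Q unfolding poly_finite_type_def by blast+
    have ra: "lrep (\<lambda>g. P g + Q g) (ts1 @ ts2)" using r1 r2 unfolding lrep_def by auto
    have "(\<lambda>g. P g + Q g) \<in> poly_finite_type X" by (rule lrep_pft[OF ra]) (simp add: zP zQ)
    moreover have "TT (\<lambda>g. P g + Q g) = a + b" using TT_eq[OF ra] TT_eq[OF r1] TT_eq[OF r2] P Q
      by (simp add: lval_def)
    ultimately show "a + b \<in> ?S" by force
    let ?ts = "concat (map (\<lambda>t1. map (\<lambda>t2. (fst t1 * fst t2, snd t1 @ snd t2)) ts2) ts1)"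
    have rm: "lrep (\<lambda>g. P g * Q g) ?ts"
      using r1 r2 unfolding lrep_def by (auto simp: tsmul_gen[where h=id, simplified])
    have "(\<lambda>g. P g * Q g) \<in> poly_finite_type X" by (rule lrep_pft[OF rm]) (simp add: zP)
    moreover have "TT (\<lambda>g. P g * Q g) = a * b" using TT_eq[OF rm] TT_eq[OF r1] TT_eq[OF r2] P Q
      unfolding lval_def by (simp add: tsmul_gen[where h=cs, OF cs_mult])
    ultimately show "a * b \<in> ?S" by force
  next
    fix c a assume "a \<in> ?S"
    then obtain P where P: "P \<in> poly_finite_type X" "a = TT P" by blast
    obtain ts where r: "lrep P ts" using pft_lrep[OF P(1)] by blast
    have zP: "\<And>g. g \<notin> CX X \<Longrightarrow> P g = 0" using P unfolding poly_finite_type_def by blast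
    let ?ts = "map (\<lambda>t. (c * fst t, snd t)) ts"
    have rs: "lrep (\<lambda>g. c * P g) ?ts"
      using r unfolding lrep_def by (auto simp: o_def sum_list_const_mult[symmetric] mult.assoc)
    have "(\<lambda>g. c * P g) \<in> poly_finite_type X" by (rule lrep_pft[OF rs]) (simp add: zP)
    moreover have "TT (\<lambda>g. c * P g) = scaleC c a" using TT_eq[OF rs] TT_eq[OF r] P
      unfolding lval_def scaleC_eq_cs by (simp add: o_def sum_list_const_mult[symmetric] cs_mult mult.assoc)
    ultimately show "scaleC c a \<in> ?S" by force
  qed
  show "?S \<subseteq> closed_subalg_gen (f ` X)"
  proof
    fix a assume "a \<in> ?S"
    then obtain P where P: "P \<in> poly_finite_type X" "a = TT P" by blast
    obtain ts where r: "lrep P ts" using pft_lrep[OF P(1)] by blast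
    have psi: "\<forall>t\<in>set ts. \<forall>\<psi>\<in>set (snd t). \<psi> \<in> CX_dual X" using r unfolding lrep_def by blast
    show "a \<in> closed_subalg_gen (f ` X)"
      unfolding closed_subalg_gen_def
    proof (intro InterI, clarify)
      fix B assume B: "csubalgebra B" "closed B" "f ` X \<subseteq> B"
      have "cs c \<in> B" for c using B(1) unfolding csubalgebra_def cs_def by blast
      moreover have "Psi \<psi> \<in> B" if "\<psi> \<in> CX_dual X" for \<psi> using Psi_mem[OF that B] .
      ultimately show "a \<in> B" unfolding P(2) TT_eq[OF r] lval_def
      proof (intro csub_sum_list[OF B(1)])
        fix t assume t: "t \<in> set ts"
        assume c: "\<And>c. cs c \<in> B" and p: "\<And>\<psi>. \<psi> \<in> CX_dual X \<Longrightarrow> Psi \<psi> \<in> B"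
        have "(\<Prod>\<psi>\<leftarrow>snd t. Psi \<psi>) \<in> B" using psi t p by (intro csub_prod_list[OF B(1)]) auto
        then show "cs (fst t) * (\<Prod>\<psi>\<leftarrow>snd t. Psi \<psi>) \<in> B" using c B(1) unfolding csubalgebra_def by blast
      qed
    qed
  qed
  show "closed_subalg_gen (f ` X) \<subseteq> closure ?S"
    unfolding closed_subalg_gen_def
  proof (rule Inter_lower, intro CollectI conjI)
    show "csubalgebra (closure ?S)" by (rule csub_closure[OF S])
    show "closed (closure ?S)" by simp
    show "f ` X \<subseteq> closure ?S"
    proof
      fix a assume "a \<in> f ` X"
      then obtain x0 where x0: "x0 \<in> X" "a = f x0" by blast
      define P where "P = (\<lambda>g::'x\<Rightarrow>complex. if g \<in> CX X then g x0 else 0)"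
      have r: "lrep P [(1, [\<lambda>g. g x0])]" unfolding lrep_def P_def using Psi_eval[OF x0(1)] by simp
      have "P \<in> poly_finite_type X" by (rule lrep_pft[OF r]) (simp add: P_def)
      moreover have "TT P = a" using TT_eq[OF r] Psi_eval[OF x0(1)] x0 by (simp add: lval_def)
      ultimately show "a \<in> closure ?S" using closure_subset by force
    qed
  qed
qed

end


theorem lemma3p2:
  fixes X :: "'x::t2_space set" and f :: "'x \<Rightarrow> 'a::cbanach_algebra"
  assumes "compact X" and "continuous_on X f"
  shows "\<exists>T :: (('x \<Rightarrow> complex) \<Rightarrow> complex) \<Rightarrow> 'a.
           (\<forall>P\<in>poly_finite_type X. \<forall>\<phi>. character \<phi> \<longrightarrow> \<phi> (T P) = P (\<phi> \<circ> f)) \<and>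
           csubalgebra (T ` poly_finite_type X) \<and>
           T ` poly_finite_type X \<subseteq> closed_subalg_gen (f ` X) \<and>
           closed_subalg_gen (f ` X) \<subseteq> closure (T ` poly_finite_type X)"
  by (rule exI[of _ "TT X f"]) (rule main[OF assms])

end
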